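(* Let $\Gamma$ be a discrete group with identity $e$ and let $S\subseteq\Gamma$ with $e\in S$, $\chi_S\in M_{cb}\mathrm{A}(\Gamma)$ and $\|\chi_S\|_{cb}<\frac{1+\sqrt{2}}{2}$. Then for all $u,v\in S$, at least one of $uv$ and $vu$ belongs to $S$.
   Context: $\mathrm{A}(\Gamma)$ denotes the Fourier algebra of $\Gamma$, the predual of the group von Neumann algebra $\mathrm{VN}(\Gamma)$, equipped with its canonical (predual) operator space structure. $M_{cb}\mathrm{A}(\Gamma)$ is the algebra of completely bounded multipliers of $\mathrm{A}(\Gamma)$: functions $\varphi:\Gamma\to\mathbb{C}$ such that $f\mapsto\varphi f$ is a completely bounded map $\mathrm{A}(\Gamma)\to\mathrm{A}(\Gamma)$; $\|\varphi\|_{cb}$ denotes the completely bounded norm of this map. *)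

theory Defs
  imports "HOL-Analysis.Analysis" "HOL-Algebra.Group"
begin

text \<open>Concrete model of the operator-space structure of the Fourier algebra of a
discrete group G, via its dual: the reduced group C*-algebra / VN(G) acting on l2(G).
An element of M_n(C[G]) is a finitely supported function a : G -> M_n(C),
representing the operator sum_g a(g) (x) lambda(g) on l2(G; C^n),
where (lambda(g) xi)(x) = xi(g^-1 x).  Vectors in l2(G;C^n) are functions
G -> nat -> complex (coordinates i < n); we use the dense subspace of finitely
supported vectors.\<close>

definition mat_supp :: "('a, 'b) monoid_scheme \<Rightarrow> nat \<Rightarrow> ('a \<Rightarrow> nat \<Rightarrow> nat \<Rightarrow> complex) \<Rightarrow> 'a set" where
  "mat_supp G n a = {g \<in> carrier G. \<exists>i<n. \<exists>j<n. a g i j \<noteq> 0}"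

definition fin_mat :: "('a, 'b) monoid_scheme \<Rightarrow> nat \<Rightarrow> ('a \<Rightarrow> nat \<Rightarrow> nat \<Rightarrow> complex) \<Rightarrow> bool" where
  "fin_mat G n a \<longleftrightarrow> finite (mat_supp G n a)"

definition vec_supp :: "('a, 'b) monoid_scheme \<Rightarrow> nat \<Rightarrow> ('a \<Rightarrow> nat \<Rightarrow> complex) \<Rightarrow> 'a set" where
  "vec_supp G n \<xi> = {x \<in> carrier G. \<exists>i<n. \<xi> x i \<noteq> 0}"

definition fin_vec :: "('a, 'b) monoid_scheme \<Rightarrow> nat \<Rightarrow> ('a \<Rightarrow> nat \<Rightarrow> complex) \<Rightarrow> bool" where
  "fin_vec G n \<xi> \<longleftrightarrow> finite (vec_supp G n \<xi>)"

definition vnorm :: "('a, 'b) monoid_scheme \<Rightarrow> nat \<Rightarrow> ('a \<Rightarrow> nat \<Rightarrow> complex) \<Rightarrow> real" where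
  "vnorm G n \<xi> = sqrt (\<Sum>x\<in>vec_supp G n \<xi>. \<Sum>i<n. (cmod (\<xi> x i))\<^sup>2)"

definition op_apply :: "('a, 'b) monoid_scheme \<Rightarrow> nat \<Rightarrow> ('a \<Rightarrow> nat \<Rightarrow> nat \<Rightarrow> complex)
    \<Rightarrow> ('a \<Rightarrow> nat \<Rightarrow> complex) \<Rightarrow> ('a \<Rightarrow> nat \<Rightarrow> complex)" where
  "op_apply G n a \<xi> = (\<lambda>x i. if x \<in> carrier G \<and> i < n
      then (\<Sum>g\<in>mat_supp G n a. \<Sum>j<n. a g i j * \<xi> (inv\<^bsub>G\<^esub> g \<otimes>\<^bsub>G\<^esub> x) j) else 0)"

text \<open>Operator norm (in B(l2(G;C^n))) of sum_g a(g) (x) lambda(g), i.e. the norm of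
a in M_n(C*_r(G)) = M_n(VN(G)).\<close>
definition op_norm :: "('a, 'b) monoid_scheme \<Rightarrow> nat \<Rightarrow> ('a \<Rightarrow> nat \<Rightarrow> nat \<Rightarrow> complex) \<Rightarrow> real" where
  "op_norm G n a = Sup {vnorm G n (op_apply G n a \<xi>) | \<xi>. fin_vec G n \<xi> \<and> vnorm G n \<xi> \<le> 1}"

text \<open>phi is a cb multiplier with cb-norm at most C: the (adjoint) multiplication map
lambda(g) |-> phi(g) lambda(g) satisfies ||id_{M_n} (x) M_phi|| \<le> C for all n.\<close>
definition cb_mult_bound :: "('a, 'b) monoid_scheme \<Rightarrow> ('a \<Rightarrow> complex) \<Rightarrow> real \<Rightarrow> bool" where
  "cb_mult_bound G \<phi> C \<longleftrightarrow> (\<forall>n a. fin_mat G n a \<longrightarrow>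
      op_norm G n (\<lambda>g i j. \<phi> g * a g i j) \<le> C * op_norm G n a)"

definition McbA :: "('a, 'b) monoid_scheme \<Rightarrow> ('a \<Rightarrow> complex) set" where
  "McbA G = {\<phi>. \<exists>C. cb_mult_bound G \<phi> C}"

definition cb_norm :: "('a, 'b) monoid_scheme \<Rightarrow> ('a \<Rightarrow> complex) \<Rightarrow> real" where
  "cb_norm G \<phi> = Inf {C. C \<ge> 0 \<and> cb_mult_bound G \<phi> C}"

definition char_fun :: "'a set \<Rightarrow> 'a \<Rightarrow> complex" where
  "char_fun S = (\<lambda>x. if x \<in> S then 1 else 0)"

end

theory Submission
  imports Defs
begin


definition selt :: "('a,'b) monoid_scheme \<Rightarrow> nat \<Rightarrow> (nat \<Rightarrow> 'a) \<Rightarrow> (nat \<Rightarrow> 'a)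
    \<Rightarrow> (nat \<Rightarrow> nat \<Rightarrow> complex) \<Rightarrow> 'a \<Rightarrow> nat \<Rightarrow> nat \<Rightarrow> complex" where
  "selt G n xs ys M = (\<lambda>g i j. if i < n \<and> j < n \<and> g = xs i \<otimes>\<^bsub>G\<^esub> inv\<^bsub>G\<^esub> (ys j) then M i j else 0)"

lemma selt_supp_sub:
  "mat_supp G n (selt G n xs ys M) \<subseteq> (\<lambda>(i,j). xs i \<otimes>\<^bsub>G\<^esub> inv\<^bsub>G\<^esub> (ys j)) ` ({..<n} \<times> {..<n})"
  unfolding mat_supp_def selt_def by (auto split: if_splits)

lemma selt_fin: "fin_mat G n (selt G n xs ys M)"
  unfolding fin_mat_def using finite_subset[OF selt_supp_sub] by auto


lemma orth_contr:
  fixes M :: "nat \<Rightarrow> nat \<Rightarrow> real"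
  assumes orth: "\<And>j k. j < n \<Longrightarrow> k < n \<Longrightarrow> (\<Sum>i<n. M i j * M i k) = (if j = k then 1 else 0)"
  shows "(\<Sum>i<n. (cmod (\<Sum>j<n. of_real (M i j) * \<eta> j))\<^sup>2) = (\<Sum>j<n. (cmod (\<eta> j))\<^sup>2)"
proof -
  have "(of_real (\<Sum>i<n. (cmod (\<Sum>j<n. of_real (M i j) * \<eta> j))\<^sup>2) :: complex)
      = (\<Sum>i<n. (\<Sum>j<n. of_real (M i j) * \<eta> j) * cnj (\<Sum>k<n. of_real (M i k) * \<eta> k))"
    by (simp only: of_real_sum complex_norm_square)
  also have "\<dots> = (\<Sum>i<n. \<Sum>j<n. \<Sum>k<n. of_real (M i j * M i k) * (\<eta> j * cnj (\<eta> k)))"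
    by (rule sum.cong[OF refl]) (simp add: cnj_sum sum_product mult_ac)
  also have "\<dots> = (\<Sum>j<n. \<Sum>k<n. \<Sum>i<n. of_real (M i j * M i k) * (\<eta> j * cnj (\<eta> k)))"
    by (subst sum.swap, rule sum.cong[OF refl], rule sum.swap)
  also have "\<dots> = (\<Sum>j<n. \<Sum>k<n. of_real (\<Sum>i<n. M i j * M i k) * (\<eta> j * cnj (\<eta> k)))"
    by (simp add: sum_distrib_right of_real_sum)
  also have "\<dots> = (\<Sum>j<n. \<Sum>k<n. (if j = k then \<eta> j * cnj (\<eta> k) else 0))"
    by (rule sum.cong[OF refl], rule sum.cong[OF refl]) (simp add: orth)
  also have "\<dots> = (\<Sum>j<n. \<eta> j * cnj (\<eta> j))"
    by (rule sum.cong[OF refl]) (simp add: sum.delta)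
  also have "\<dots> = of_real (\<Sum>j<n. (cmod (\<eta> j))\<^sup>2)"
    by (simp only: of_real_sum complex_norm_square)
  finally show ?thesis using of_real_eq_iff by blast
qed

lemma final_contra:
  fixes L R C :: real
  assumes h: "L \<le> C\<^sup>2 * R" and C0: "0 \<le> C" and Cc: "C < (1 + sqrt 2) / 2" and R: "R > 0"
    and p: "4*L - 3*R \<ge> 0" and q: "8 * R\<^sup>2 \<le> (4*L - 3*R)\<^sup>2"
  shows False
proof -
  have c2: "((1 + sqrt 2)/2)\<^sup>2 = (3 + 2 * sqrt 2)/4" by (simp add: power2_eq_square algebra_simps)
  have "C\<^sup>2 < ((1 + sqrt 2)/2)\<^sup>2" by (rule power_strict_mono[OF Cc C0]) simp
  then have "C\<^sup>2 * R < (3 + 2 * sqrt 2)/4 * R" using R c2 by (simp add: mult_strict_right_mono)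
  with h have "4*L - 3*R < 2 * sqrt 2 * R" by (simp add: field_simps)
  then have "(4*L - 3*R)\<^sup>2 < (2 * sqrt 2 * R)\<^sup>2" by (rule power_strict_mono[OF _ p]) simp
  also have "(2 * sqrt 2 * R)\<^sup>2 = 8 * R\<^sup>2" by (simp add: power_mult_distrib)
  finally show False using q by simp
qed

context group
begin

lemma op_apply_selt:
  assumes xs: "\<forall>i<n. xs i \<in> carrier G" and ys: "\<forall>j<n. ys j \<in> carrier G"
    and x: "x \<in> carrier G" and i: "i < n"
  shows "op_apply G n (selt G n xs ys M) \<xi> x i
       = (\<Sum>j<n. M i j * \<xi> (ys j \<otimes>\<^bsub>G\<^esub> (inv\<^bsub>G\<^esub> (xs i) \<otimes>\<^bsub>G\<^esub> x)) j)"
proof -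
  let ?a = "selt G n xs ys M"
  let ?A = "mat_supp G n ?a"
  have finA: "finite ?A" using selt_fin[of G n xs ys M] by (simp add: fin_mat_def)
  have "op_apply G n ?a \<xi> x i = (\<Sum>g\<in>?A. \<Sum>j<n. ?a g i j * \<xi> (inv g \<otimes> x) j)"
    using x i by (simp add: op_apply_def)
  also have "\<dots> = (\<Sum>j<n. \<Sum>g\<in>?A. ?a g i j * \<xi> (inv g \<otimes> x) j)" by (rule sum.swap)
  also have "\<dots> = (\<Sum>j<n. M i j * \<xi> (ys j \<otimes> (inv (xs i) \<otimes> x)) j)"
  proof (rule sum.cong[OF refl])
    fix j assume j: "j \<in> {..<n}"
    let ?h = "xs i \<otimes> inv (ys j)"
    have hc: "?h \<in> carrier G" using xs ys i j by auto
    have inv_h: "inv ?h \<otimes> x = ys j \<otimes> (inv (xs i) \<otimes> x)"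
      using xs ys i j x by (simp add: inv_mult_group m_assoc)
    have "(\<Sum>g\<in>?A. ?a g i j * \<xi> (inv g \<otimes> x) j)
        = (\<Sum>g\<in>?A. if g = ?h then M i j * \<xi> (inv ?h \<otimes> x) j else 0)"
      by (rule sum.cong) (use i j in \<open>auto simp: selt_def\<close>)
    also have "\<dots> = (if ?h \<in> ?A then M i j * \<xi> (inv ?h \<otimes> x) j else 0)"
      using finA by (simp add: sum.delta)
    also have "\<dots> = M i j * \<xi> (inv ?h \<otimes> x) j"
    proof (cases "?h \<in> ?A")
      case False
      have "M i j = 0"
      proof (rule ccontr)
        assume "M i j \<noteq> 0"
        then have "?h \<in> ?A" using hc i j unfolding mat_supp_def selt_def by auto
        with False show False by simp
      qed
      then show ?thesis by simp
    qed simp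
    finally show "(\<Sum>g\<in>?A. ?a g i j * \<xi> (inv g \<otimes> x) j) = M i j * \<xi> (ys j \<otimes> (inv (xs i) \<otimes> x)) j"
      using inv_h by simp
  qed
  finally show ?thesis .
qed

lemma vnorm_nonneg: "vnorm G n \<xi> \<ge> 0"
  unfolding vnorm_def by (simp add: sum_nonneg)

lemma vnorm_superset:
  assumes "finite A" "vec_supp G n \<xi> \<subseteq> A" "A \<subseteq> carrier G"
  shows "vnorm G n \<xi> = sqrt (\<Sum>x\<in>A. \<Sum>i<n. (cmod (\<xi> x i))\<^sup>2)"
proof -
  have "(\<Sum>x\<in>vec_supp G n \<xi>. \<Sum>i<n. (cmod (\<xi> x i))\<^sup>2) = (\<Sum>x\<in>A. \<Sum>i<n. (cmod (\<xi> x i))\<^sup>2)"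
  proof (rule sum.mono_neutral_left[OF assms(1,2)])
    show "\<forall>x\<in>A - vec_supp G n \<xi>. (\<Sum>i<n. (cmod (\<xi> x i))\<^sup>2) = 0"
    proof
      fix x assume "x \<in> A - vec_supp G n \<xi>"
      then have "\<forall>i<n. \<xi> x i = 0" using assms(3) by (auto simp: vec_supp_def)
      then show "(\<Sum>i<n. (cmod (\<xi> x i))\<^sup>2) = 0" by simp
    qed
  qed
  then show ?thesis by (simp add: vnorm_def)
qed


lemma vnorm_sq: "(vnorm G n \<xi>)\<^sup>2 = (\<Sum>x\<in>vec_supp G n \<xi>. \<Sum>i<n. (cmod (\<xi> x i))\<^sup>2)"
  unfolding vnorm_def by (simp add: sum_nonneg)

lemma selt_bound:
  assumes xs: "\<forall>i<n. xs i \<in> carrier G" and ys: "\<forall>j<n. ys j \<in> carrier G"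
    and B: "B \<ge> 0"
    and hB: "\<And>\<eta>. (\<Sum>i<n. (cmod (\<Sum>j<n. M i j * \<eta> j))\<^sup>2) \<le> B\<^sup>2 * (\<Sum>j<n. (cmod (\<eta> j))\<^sup>2)"
    and fv: "fin_vec G n \<xi>"
  shows "vnorm G n (op_apply G n (selt G n xs ys M) \<xi>) \<le> B * vnorm G n \<xi>"
proof -
  define V where "V = vec_supp G n \<xi>"
  have finV: "finite V" using fv by (simp add: fin_vec_def V_def)
  have Vc: "V \<subseteq> carrier G" by (auto simp: V_def vec_supp_def)
  define Z where "Z = (\<Union>j<n. (\<lambda>w. inv (ys j) \<otimes> w) ` V)"
  have finZ: "finite Z" using finV by (simp add: Z_def)
  have Zc: "Z \<subseteq> carrier G" using Vc ys by (auto simp: Z_def)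
  define A where "A = (\<Union>i<n. (\<lambda>z. xs i \<otimes> z) ` Z)"
  have finA: "finite A" using finZ by (simp add: A_def)
  have Ac: "A \<subseteq> carrier G" using Zc xs by (auto simp: A_def)
  let ?o = "op_apply G n (selt G n xs ys M) \<xi>"
  have o_eq: "\<And>x i. x \<in> carrier G \<Longrightarrow> i < n \<Longrightarrow>
      ?o x i = (\<Sum>j<n. M i j * \<xi> (ys j \<otimes> (inv (xs i) \<otimes> x)) j)"
    using op_apply_selt[OF xs ys] by blast
  have o_zero: "?o x i = 0" if x: "x \<in> carrier G" and i: "i < n"
      and nx: "x \<notin> (\<lambda>z. xs i \<otimes> z) ` Z" for x i
  proof -
    have "\<forall>j<n. \<xi> (ys j \<otimes> (inv (xs i) \<otimes> x)) j = 0"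
    proof (intro allI impI, rule ccontr)
      fix j assume j: "j < n" and ne: "\<xi> (ys j \<otimes> (inv (xs i) \<otimes> x)) j \<noteq> 0"
      let ?w = "ys j \<otimes> (inv (xs i) \<otimes> x)"
      have wc: "?w \<in> carrier G" using x xs ys i j by auto
      have "?w \<in> V" using ne j wc by (auto simp: V_def vec_supp_def)
      then have "inv (ys j) \<otimes> ?w \<in> Z" using j by (auto simp: Z_def)
      moreover have "inv (ys j) \<otimes> ?w = inv (xs i) \<otimes> x"
        using x xs ys i j by (simp add: m_assoc[symmetric])
      moreover have "xs i \<otimes> (inv (xs i) \<otimes> x) = x"
        using x xs i by (simp add: m_assoc[symmetric])
      ultimately have "x \<in> (\<lambda>z. xs i \<otimes> z) ` Z" by (metis image_eqI)
      with nx show False by simp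
    qed
    then show "?o x i = 0" using o_eq[OF x i] by simp
  qed
  have suppA: "vec_supp G n ?o \<subseteq> A"
  proof
    fix x assume "x \<in> vec_supp G n ?o"
    then obtain i where x: "x \<in> carrier G" and i: "i < n" and ne: "?o x i \<noteq> 0"
      by (auto simp: vec_supp_def)
    then have "x \<in> (\<lambda>z. xs i \<otimes> z) ` Z" using o_zero by blast
    then show "x \<in> A" using i by (auto simp: A_def)
  qed
  have "(vnorm G n ?o)\<^sup>2 = (\<Sum>x\<in>A. \<Sum>i<n. (cmod (?o x i))\<^sup>2)"
    using vnorm_superset[OF finA suppA Ac] by (simp add: sum_nonneg)
  also have "\<dots> = (\<Sum>i<n. \<Sum>x\<in>A. (cmod (?o x i))\<^sup>2)" by (rule sum.swap)
  also have "\<dots> = (\<Sum>i<n. \<Sum>z\<in>Z. (cmod (\<Sum>j<n. M i j * \<xi> (ys j \<otimes> z) j))\<^sup>2)"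
  proof (rule sum.cong[OF refl])
    fix i assume i: "i \<in> {..<n}"
    have sub: "(\<lambda>z. xs i \<otimes> z) ` Z \<subseteq> A" using i by (auto simp: A_def)
    have "(\<Sum>x\<in>A. (cmod (?o x i))\<^sup>2) = (\<Sum>x\<in>(\<lambda>z. xs i \<otimes> z) ` Z. (cmod (?o x i))\<^sup>2)"
      by (rule sum.mono_neutral_right[OF finA sub]) (use o_zero Ac i in auto)
    also have "\<dots> = (\<Sum>z\<in>Z. (cmod (?o (xs i \<otimes> z) i))\<^sup>2)"
    proof (rule sum.reindex[unfolded comp_def])
      show "inj_on (\<lambda>z. xs i \<otimes> z) Z"
        using inj_on_cmult[of "xs i"] xs i Zc by (auto intro: inj_on_subset)
    qed
    also have "\<dots> = (\<Sum>z\<in>Z. (cmod (\<Sum>j<n. M i j * \<xi> (ys j \<otimes> z) j))\<^sup>2)"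
    proof (rule sum.cong[OF refl])
      fix z assume z: "z \<in> Z"
      have zc: "z \<in> carrier G" using z Zc by auto
      have "inv (xs i) \<otimes> (xs i \<otimes> z) = z" using zc xs i by (simp add: m_assoc[symmetric])
      then show "(cmod (?o (xs i \<otimes> z) i))\<^sup>2 = (cmod (\<Sum>j<n. M i j * \<xi> (ys j \<otimes> z) j))\<^sup>2"
        using o_eq[of "xs i \<otimes> z" i] zc xs i by simp
    qed
    finally show "(\<Sum>x\<in>A. (cmod (?o x i))\<^sup>2) = (\<Sum>z\<in>Z. (cmod (\<Sum>j<n. M i j * \<xi> (ys j \<otimes> z) j))\<^sup>2)" .
  qed
  also have "\<dots> = (\<Sum>z\<in>Z. \<Sum>i<n. (cmod (\<Sum>j<n. M i j * \<xi> (ys j \<otimes> z) j))\<^sup>2)" by (rule sum.swap)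
  also have "\<dots> \<le> (\<Sum>z\<in>Z. B\<^sup>2 * (\<Sum>j<n. (cmod (\<xi> (ys j \<otimes> z) j))\<^sup>2))"
    by (rule sum_mono) (rule hB)
  also have "\<dots> = B\<^sup>2 * (\<Sum>j<n. \<Sum>z\<in>Z. (cmod (\<xi> (ys j \<otimes> z) j))\<^sup>2)"
    by (simp add: sum_distrib_left sum.swap[of _ Z])
  also have "\<dots> = B\<^sup>2 * (\<Sum>j<n. \<Sum>w\<in>V. (cmod (\<xi> w j))\<^sup>2)"
  proof -
    have "(\<Sum>z\<in>Z. (cmod (\<xi> (ys j \<otimes> z) j))\<^sup>2) = (\<Sum>w\<in>V. (cmod (\<xi> w j))\<^sup>2)" if j: "j < n" for j
    proof -
      have "(\<Sum>z\<in>Z. (cmod (\<xi> (ys j \<otimes> z) j))\<^sup>2) = (\<Sum>w\<in>(\<lambda>z. ys j \<otimes> z) ` Z. (cmod (\<xi> w j))\<^sup>2)"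
      proof (rule sum.reindex[unfolded comp_def, symmetric])
        show "inj_on (\<lambda>z. ys j \<otimes> z) Z"
          using inj_on_cmult[of "ys j"] ys j Zc by (auto intro: inj_on_subset)
      qed
      also have "\<dots> = (\<Sum>w\<in>V. (cmod (\<xi> w j))\<^sup>2)"
      proof (rule sum.mono_neutral_right)
        show "finite ((\<lambda>z. ys j \<otimes> z) ` Z)" using finZ by simp
        show "V \<subseteq> (\<lambda>z. ys j \<otimes> z) ` Z"
        proof
          fix w assume w: "w \<in> V"
          have "inv (ys j) \<otimes> w \<in> Z" using w j by (auto simp: Z_def)
          moreover have "ys j \<otimes> (inv (ys j) \<otimes> w) = w"
            using w Vc ys j by (simp add: m_assoc[symmetric] subset_iff)
          ultimately show "w \<in> (\<lambda>z. ys j \<otimes> z) ` Z" by (metis image_eqI)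
        qed
        show "\<forall>w\<in>(\<lambda>z. ys j \<otimes> z) ` Z - V. (cmod (\<xi> w j))\<^sup>2 = 0"
        proof
          fix w assume w: "w \<in> (\<lambda>z. ys j \<otimes> z) ` Z - V"
          then have "w \<in> carrier G" using Zc ys j by auto
          with w j show "(cmod (\<xi> w j))\<^sup>2 = 0" by (auto simp: V_def vec_supp_def)
        qed
      qed
      finally show ?thesis .
    qed
    then show ?thesis by simp
  qed
  also have "\<dots> = B\<^sup>2 * (vnorm G n \<xi>)\<^sup>2"
    by (simp add: vnorm_sq V_def sum.swap[of _ "vec_supp G n \<xi>"])
  also have "\<dots> = (B * vnorm G n \<xi>)\<^sup>2" by (simp add: power_mult_distrib)
  finally have "(vnorm G n ?o)\<^sup>2 \<le> (B * vnorm G n \<xi>)\<^sup>2" .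
  then show ?thesis using B vnorm_nonneg[of n \<xi>] by (meson power2_le_imp_le mult_nonneg_nonneg)
qed


lemma tvec_fin:
  assumes ys: "\<forall>j<n. ys j \<in> carrier G"
  shows "fin_vec G n (\<lambda>x j. if j < n \<and> x = ys j then \<eta> j else 0)"
proof -
  have "vec_supp G n (\<lambda>x j. if j < n \<and> x = ys j then \<eta> j else 0) \<subseteq> ys ` {..<n}"
    by (auto simp: vec_supp_def split: if_splits)
  then show ?thesis unfolding fin_vec_def by (rule finite_subset) simp
qed

lemma tvec_norm:
  assumes ys: "\<forall>j<n. ys j \<in> carrier G"
  shows "vnorm G n (\<lambda>x j. if j < n \<and> x = ys j then \<eta> j else 0) = sqrt (\<Sum>j<n. (cmod (\<eta> j))\<^sup>2)"
proof -
  let ?t = "\<lambda>x j. if j < n \<and> x = ys j then \<eta> j else 0"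
  have sub: "vec_supp G n ?t \<subseteq> ys ` {..<n}"
    by (auto simp: vec_supp_def split: if_splits)
  have c: "ys ` {..<n} \<subseteq> carrier G" using ys by auto
  have "vnorm G n ?t = sqrt (\<Sum>x\<in>ys ` {..<n}. \<Sum>j<n. (cmod (?t x j))\<^sup>2)"
    by (rule vnorm_superset[OF _ sub c]) simp
  also have "(\<Sum>x\<in>ys ` {..<n}. \<Sum>j<n. (cmod (?t x j))\<^sup>2)
      = (\<Sum>j<n. \<Sum>x\<in>ys ` {..<n}. if x = ys j then (cmod (\<eta> j))\<^sup>2 else 0)"
    by (subst sum.swap) (rule sum.cong[OF refl], rule sum.cong[OF refl], auto)
  also have "\<dots> = (\<Sum>j<n. (cmod (\<eta> j))\<^sup>2)"
    by (rule sum.cong[OF refl]) (simp add: sum.delta)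
  finally show ?thesis .
qed

lemma op_apply_tvec:
  assumes xs: "\<forall>i<n. xs i \<in> carrier G" and ys: "\<forall>j<n. ys j \<in> carrier G"
    and x: "x \<in> carrier G" and i: "i < n"
  shows "op_apply G n (selt G n xs ys M) (\<lambda>x j. if j < n \<and> x = ys j then \<eta> j else 0) x i
       = (if x = xs i then (\<Sum>j<n. M i j * \<eta> j) else 0)"
proof -
  have key: "(ys j \<otimes> (inv (xs i) \<otimes> x) = ys j) \<longleftrightarrow> x = xs i" if j: "j < n" for j
  proof -
    have "(ys j \<otimes> (inv (xs i) \<otimes> x) = ys j) \<longleftrightarrow> inv (xs i) \<otimes> x = \<one>"
      using ys j xs i x by simp
    also have "\<dots> \<longleftrightarrow> x = xs i"
      using xs i x by (metis inv_closed inv_inv l_inv r_inv inv_equality)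
    finally show ?thesis .
  qed
  show ?thesis
    unfolding op_apply_selt[OF xs ys x i]
    using key by (auto intro!: sum.cong)
qed

lemma tvec_out_norm:
  assumes xs: "\<forall>i<n. xs i \<in> carrier G" and ys: "\<forall>j<n. ys j \<in> carrier G"
  shows "vnorm G n (op_apply G n (selt G n xs ys M) (\<lambda>x j. if j < n \<and> x = ys j then \<eta> j else 0))
       = sqrt (\<Sum>i<n. (cmod (\<Sum>j<n. M i j * \<eta> j))\<^sup>2)"
proof -
  let ?o = "op_apply G n (selt G n xs ys M) (\<lambda>x j. if j < n \<and> x = ys j then \<eta> j else 0)"
  have oe: "\<And>x i. x \<in> carrier G \<Longrightarrow> i < n \<Longrightarrow> ?o x i = (if x = xs i then (\<Sum>j<n. M i j * \<eta> j) else 0)"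
    using op_apply_tvec[OF xs ys] by blast
  have sub: "vec_supp G n ?o \<subseteq> xs ` {..<n}"
  proof
    fix x assume "x \<in> vec_supp G n ?o"
    then obtain i where "x \<in> carrier G" "i < n" "?o x i \<noteq> 0" by (auto simp: vec_supp_def)
    then show "x \<in> xs ` {..<n}" using oe by (auto split: if_splits)
  qed
  have c: "xs ` {..<n} \<subseteq> carrier G" using xs by auto
  have "vnorm G n ?o = sqrt (\<Sum>x\<in>xs ` {..<n}. \<Sum>i<n. (cmod (?o x i))\<^sup>2)"
    by (rule vnorm_superset[OF _ sub c]) simp
  also have "(\<Sum>x\<in>xs ` {..<n}. \<Sum>i<n. (cmod (?o x i))\<^sup>2)
      = (\<Sum>i<n. \<Sum>x\<in>xs ` {..<n}. if x = xs i then (cmod (\<Sum>j<n. M i j * \<eta> j))\<^sup>2 else 0)"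
  proof (subst sum.swap, rule sum.cong[OF refl], rule sum.cong[OF refl])
    fix i x assume i: "i \<in> {..<n}" and x: "x \<in> xs ` {..<n}"
    have xc: "x \<in> carrier G" using x c by auto
    show "(cmod (?o x i))\<^sup>2 = (if x = xs i then (cmod (\<Sum>j<n. M i j * \<eta> j))\<^sup>2 else 0)"
      using oe[OF xc] i by simp
  qed
  also have "\<dots> = (\<Sum>i<n. (cmod (\<Sum>j<n. M i j * \<eta> j))\<^sup>2)"
    by (rule sum.cong[OF refl]) (simp add: sum.delta)
  finally show ?thesis .
qed

lemma frob_bound:
  "(\<Sum>i<n. (cmod (\<Sum>j<n. M i j * \<eta> j))\<^sup>2)
     \<le> (sqrt (\<Sum>i<n. \<Sum>j<n. (cmod (M i j))\<^sup>2))\<^sup>2 * (\<Sum>j<n. (cmod (\<eta> j))\<^sup>2)"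
proof -
  have "(cmod (\<Sum>j<n. M i j * \<eta> j))\<^sup>2 \<le> (\<Sum>j<n. (cmod (M i j))\<^sup>2) * (\<Sum>j<n. (cmod (\<eta> j))\<^sup>2)" for i
  proof -
    have "cmod (\<Sum>j<n. M i j * \<eta> j) \<le> (\<Sum>j<n. cmod (M i j) * cmod (\<eta> j))"
      by (rule order_trans[OF norm_sum]) (simp add: norm_mult)
    then have "(cmod (\<Sum>j<n. M i j * \<eta> j))\<^sup>2 \<le> (\<Sum>j<n. cmod (M i j) * cmod (\<eta> j))\<^sup>2"
      by (rule power_mono) simp
    also have "\<dots> \<le> (\<Sum>j<n. (cmod (M i j))\<^sup>2) * (\<Sum>j<n. (cmod (\<eta> j))\<^sup>2)"
      by (rule Cauchy_Schwarz_ineq_sum)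
    finally show ?thesis .
  qed
  then have "(\<Sum>i<n. (cmod (\<Sum>j<n. M i j * \<eta> j))\<^sup>2)
      \<le> (\<Sum>i<n. (\<Sum>j<n. (cmod (M i j))\<^sup>2) * (\<Sum>j<n. (cmod (\<eta> j))\<^sup>2))"
    by (rule sum_mono)
  also have "\<dots> = (\<Sum>i<n. \<Sum>j<n. (cmod (M i j))\<^sup>2) * (\<Sum>j<n. (cmod (\<eta> j))\<^sup>2)"
    by (simp add: sum_distrib_right)
  finally show ?thesis by (simp add: sum_nonneg)
qed

lemma zero_vec: "fin_vec G n (\<lambda>x i. 0)" "vnorm G n (\<lambda>x i. 0) = 0"
  by (auto simp: fin_vec_def vec_supp_def vnorm_def)

lemma op_norm_selt:
  assumes xs: "\<forall>i<n. xs i \<in> carrier G" and ys: "\<forall>j<n. ys j \<in> carrier G"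
    and B: "B \<ge> 0"
    and hB: "\<And>\<eta>. (\<Sum>i<n. (cmod (\<Sum>j<n. M i j * \<eta> j))\<^sup>2) \<le> B\<^sup>2 * (\<Sum>j<n. (cmod (\<eta> j))\<^sup>2)"
  shows "op_norm G n (selt G n xs ys M) \<le> B"
    and "bdd_above {vnorm G n (op_apply G n (selt G n xs ys M) \<xi>) | \<xi>. fin_vec G n \<xi> \<and> vnorm G n \<xi> \<le> 1}"
proof -
  let ?X = "{vnorm G n (op_apply G n (selt G n xs ys M) \<xi>) | \<xi>. fin_vec G n \<xi> \<and> vnorm G n \<xi> \<le> 1}"
  have le: "y \<le> B" if "y \<in> ?X" for y
  proof -
    obtain \<xi> where y: "y = vnorm G n (op_apply G n (selt G n xs ys M) \<xi>)"
      and f: "fin_vec G n \<xi>" and v: "vnorm G n \<xi> \<le> 1" using \<open>y \<in> ?X\<close> by blast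
    have "y \<le> B * vnorm G n \<xi>" using selt_bound[OF xs ys B hB f] y by simp
    also have "\<dots> \<le> B" using B v by (simp add: mult_left_le)
    finally show ?thesis .
  qed
  have "vnorm G n (op_apply G n (selt G n xs ys M) (\<lambda>x i. 0)) \<in> ?X"
    using zero_vec by fastforce
  then have ne: "?X \<noteq> {}" by blast
  show "op_norm G n (selt G n xs ys M) \<le> B"
    unfolding op_norm_def by (rule cSup_least[OF ne]) (rule le)
  show "bdd_above ?X" by (rule bdd_aboveI[of _ B]) (rule le)
qed

lemma op_norm_selt_upper:
  assumes xs: "\<forall>i<n. xs i \<in> carrier G" and ys: "\<forall>j<n. ys j \<in> carrier G"
    and f: "fin_vec G n \<xi>" and v: "vnorm G n \<xi> \<le> 1"
  shows "vnorm G n (op_apply G n (selt G n xs ys M) \<xi>) \<le> op_norm G n (selt G n xs ys M)"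
proof -
  let ?B = "sqrt (\<Sum>i<n. \<Sum>j<n. (cmod (M i j))\<^sup>2)"
  have B: "?B \<ge> 0" by (simp add: sum_nonneg)
  have bdd: "bdd_above {vnorm G n (op_apply G n (selt G n xs ys M) \<xi>) | \<xi>. fin_vec G n \<xi> \<and> vnorm G n \<xi> \<le> 1}"
    by (rule op_norm_selt(2)[OF xs ys B frob_bound])
  have mem: "vnorm G n (op_apply G n (selt G n xs ys M) \<xi>)
     \<in> {vnorm G n (op_apply G n (selt G n xs ys M) \<xi>) | \<xi>. fin_vec G n \<xi> \<and> vnorm G n \<xi> \<le> 1}"
    using f v by blast
  show ?thesis unfolding op_norm_def by (rule cSup_upper[OF mem bdd])
qed


lemma schur_main:
  fixes n :: nat
  assumes xs: "\<forall>i<n. xs i \<in> carrier G" and ys: "\<forall>j<n. ys j \<in> carrier G"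
    and cb: "cb_mult_bound G \<phi> C" and C0: "C \<ge> 0"
    and hM: "\<And>\<eta>. (\<Sum>i<n. (cmod (\<Sum>j<n. M i j * \<eta> j))\<^sup>2) \<le> 1\<^sup>2 * (\<Sum>j<n. (cmod (\<eta> j))\<^sup>2)"
  shows "(\<Sum>i<n. (cmod (\<Sum>j<n. \<phi> (xs i \<otimes> inv (ys j)) * M i j * \<eta> j))\<^sup>2)
           \<le> C\<^sup>2 * (\<Sum>j<n. (cmod (\<eta> j))\<^sup>2)"
proof -
  define M' where "M' = (\<lambda>i j. \<phi> (xs i \<otimes> inv (ys j)) * M i j)"
  have eq: "(\<lambda>g i j. \<phi> g * selt G n xs ys M g i j) = selt G n xs ys M'"
    by (auto simp: selt_def M'_def fun_eq_iff)
  have le1: "op_norm G n (selt G n xs ys M) \<le> 1" by (rule op_norm_selt(1)[OF xs ys _ hM]) simp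
  have "op_norm G n (\<lambda>g i j. \<phi> g * selt G n xs ys M g i j) \<le> C * op_norm G n (selt G n xs ys M)"
    using cb selt_fin[of G n xs ys M] unfolding cb_mult_bound_def by blast
  then have "op_norm G n (selt G n xs ys M') \<le> C * op_norm G n (selt G n xs ys M)"
    by (simp only: eq)
  also have "\<dots> \<le> C" using le1 C0 by (simp add: mult_left_le)
  finally have opC: "op_norm G n (selt G n xs ys M') \<le> C" .
  define S where "S = (\<Sum>j<n. (cmod (\<eta> j))\<^sup>2)"
  define L where "L = (\<Sum>i<n. (cmod (\<Sum>j<n. M' i j * \<eta> j))\<^sup>2)"
  have S0: "S \<ge> 0" by (simp add: S_def sum_nonneg)
  have L0: "L \<ge> 0" by (simp add: L_def sum_nonneg)
  have goal: "L \<le> C\<^sup>2 * S"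
  proof (cases "S = 0")
    case True
    then have "\<forall>j<n. \<eta> j = 0" unfolding S_def by (simp add: sum_nonneg_eq_0_iff)
    then have "L = 0" by (simp add: L_def)
    then show ?thesis using True by simp
  next
    case False
    then have Sp: "S > 0" using S0 by simp
    define N where "N = sqrt S"
    have Np: "N > 0" using Sp by (simp add: N_def)
    have N2: "N\<^sup>2 = S" using S0 by (simp add: N_def)
    define \<eta>' where "\<eta>' = (\<lambda>j. \<eta> j / of_real N)"
    have "(\<Sum>j<n. (cmod (\<eta>' j))\<^sup>2) = S / N\<^sup>2"
      using Np by (simp add: \<eta>'_def S_def norm_divide power_divide sum_divide_distrib)
    then have n1: "(\<Sum>j<n. (cmod (\<eta>' j))\<^sup>2) = 1" using Sp N2 by simp
    let ?t = "\<lambda>x j. if j < n \<and> x = ys j then \<eta>' j else 0"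
    have f: "fin_vec G n ?t" by (rule tvec_fin[OF ys])
    have v: "vnorm G n ?t \<le> 1" using tvec_norm[OF ys, of \<eta>'] n1 by simp
    have "vnorm G n (op_apply G n (selt G n xs ys M') ?t) \<le> C"
      using op_norm_selt_upper[OF xs ys f v, of M'] opC by linarith
    moreover have "vnorm G n (op_apply G n (selt G n xs ys M') ?t) = sqrt L / N"
    proof -
      have e1: "(\<Sum>j<n. M' i j * \<eta>' j) = (\<Sum>j<n. M' i j * \<eta> j) / of_real N" for i
        by (simp add: \<eta>'_def sum_divide_distrib)
      have e2: "(cmod (\<Sum>j<n. M' i j * \<eta>' j))\<^sup>2 = (cmod (\<Sum>j<n. M' i j * \<eta> j))\<^sup>2 / N\<^sup>2" for i
        using Np by (simp add: e1 norm_divide power_divide)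
      have "(\<Sum>i<n. (cmod (\<Sum>j<n. M' i j * \<eta>' j))\<^sup>2) = L / N\<^sup>2"
        by (simp only: e2 L_def sum_divide_distrib)
      then show ?thesis using tvec_out_norm[OF xs ys, of M' \<eta>'] Np L0
        by (simp add: real_sqrt_divide)
    qed
    ultimately have "sqrt L \<le> C * N" using Np by (simp add: divide_le_eq)
    then have "(sqrt L)\<^sup>2 \<le> (C * N)\<^sup>2" by (rule power_mono) (simp add: L0)
    then show ?thesis using L0 N2 by (simp add: power_mult_distrib)
  qed
  then show ?thesis by (simp add: L_def S_def M'_def)
qed

lemma cert_apply:
  fixes Mt P :: "nat \<Rightarrow> nat \<Rightarrow> real" and et :: "nat \<Rightarrow> real"
  assumes xs: "\<forall>i<n. xs i \<in> carrier G" and ys: "\<forall>j<n. ys j \<in> carrier G"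
    and cb: "cb_mult_bound G \<phi> C" and C0: "C \<ge> 0"
    and orth: "\<And>j k. j < n \<Longrightarrow> k < n \<Longrightarrow> (\<Sum>i<n. Mt i j * Mt i k) = (if j = k then 1 else 0)"
    and hP: "\<And>i j. i < n \<Longrightarrow> j < n \<Longrightarrow> \<phi> (xs i \<otimes> inv (ys j)) = of_real (P i j)"
  shows "(\<Sum>i<n. (\<Sum>j<n. P i j * Mt i j * et j)\<^sup>2) \<le> C\<^sup>2 * (\<Sum>j<n. (et j)\<^sup>2)"
proof -
  have hM: "(\<Sum>i<n. (cmod (\<Sum>j<n. of_real (Mt i j) * \<eta> j))\<^sup>2) \<le> 1\<^sup>2 * (\<Sum>j<n. (cmod (\<eta> j))\<^sup>2)" for \<eta>
    using orth_contr[of n Mt \<eta>] orth by simp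
  have A: "(\<Sum>i<n. (cmod (\<Sum>j<n. \<phi> (xs i \<otimes> inv (ys j)) * of_real (Mt i j) * of_real (et j)))\<^sup>2)
      \<le> C\<^sup>2 * (\<Sum>j<n. (cmod (of_real (et j) :: complex))\<^sup>2)"
    by (rule schur_main[OF xs ys cb C0 hM])
  have B: "(\<Sum>j<n. \<phi> (xs i \<otimes> inv (ys j)) * of_real (Mt i j) * of_real (et j))
      = (of_real (\<Sum>j<n. P i j * Mt i j * et j) :: complex)" if i: "i < n" for i
    using hP i by simp
  have "(\<Sum>i<n. (cmod (\<Sum>j<n. \<phi> (xs i \<otimes> inv (ys j)) * of_real (Mt i j) * of_real (et j)))\<^sup>2)
      = (\<Sum>i<n. (\<Sum>j<n. P i j * Mt i j * et j)\<^sup>2)"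
  proof (rule sum.cong[OF refl])
    fix i assume "i \<in> {..<n}"
    then have i: "i < n" by simp
    show "(cmod (\<Sum>j<n. \<phi> (xs i \<otimes> inv (ys j)) * of_real (Mt i j) * of_real (et j)))\<^sup>2
        = (\<Sum>j<n. P i j * Mt i j * et j)\<^sup>2"
      by (simp only: B[OF i] norm_of_real power2_abs)
  qed
  then show ?thesis using A by simp
qed

lemma obtain_C:
  assumes mc: "\<phi> \<in> McbA G" and lt: "cb_norm G \<phi> < c"
  obtains C where "cb_mult_bound G \<phi> C" "C \<ge> 0" "C < c"
proof -
  obtain C0 where cb0: "cb_mult_bound G \<phi> C0" using mc by (auto simp: McbA_def)
  let ?xs = "\<lambda>i::nat. \<one>"
  let ?M = "\<lambda>i j::nat. (1::complex)"
  let ?M' = "\<lambda>i j. \<phi> (?xs i \<otimes> inv (?xs j)) * ?M i j"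
  have xs: "\<forall>i<1. ?xs i \<in> carrier G" by simp
  have eq: "(\<lambda>g i j. \<phi> g * selt G 1 ?xs ?xs ?M g i j) = selt G 1 ?xs ?xs ?M'"
    by (auto simp: selt_def fun_eq_iff)
  let ?t = "\<lambda>x j. if j < 1 \<and> x = ?xs j then (1::complex) else 0"
  have f: "fin_vec G 1 ?t" by (rule tvec_fin[OF xs])
  have v: "vnorm G 1 ?t \<le> 1" using tvec_norm[OF xs, of "\<lambda>_. 1"] by simp
  have "vnorm G 1 (op_apply G 1 (selt G 1 ?xs ?xs ?M) ?t) = 1"
    using tvec_out_norm[OF xs xs, of ?M "\<lambda>_. 1"] by simp
  then have a1: "op_norm G 1 (selt G 1 ?xs ?xs ?M) \<ge> 1"
    using op_norm_selt_upper[OF xs xs f v, of ?M] by simp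
  have "0 \<le> vnorm G 1 (op_apply G 1 (selt G 1 ?xs ?xs ?M') (\<lambda>x i. 0))" by (rule vnorm_nonneg)
  also have "\<dots> \<le> op_norm G 1 (selt G 1 ?xs ?xs ?M')"
    by (rule op_norm_selt_upper[OF xs xs]) (simp_all add: zero_vec)
  finally have b0: "0 \<le> op_norm G 1 (selt G 1 ?xs ?xs ?M')" .
  have "op_norm G 1 (\<lambda>g i j. \<phi> g * selt G 1 ?xs ?xs ?M g i j) \<le> C0 * op_norm G 1 (selt G 1 ?xs ?xs ?M)"
    using cb0 selt_fin[of G 1 ?xs ?xs ?M] unfolding cb_mult_bound_def by blast
  then have "op_norm G 1 (selt G 1 ?xs ?xs ?M') \<le> C0 * op_norm G 1 (selt G 1 ?xs ?xs ?M)"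
    by (simp only: eq)
  with b0 have "0 \<le> C0 * op_norm G 1 (selt G 1 ?xs ?xs ?M)" by linarith
  with a1 have C0pos: "C0 \<ge> 0" by (simp add: zero_le_mult_iff)
  let ?X = "{C. C \<ge> 0 \<and> cb_mult_bound G \<phi> C}"
  have ne: "?X \<noteq> {}" using cb0 C0pos by blast
  have "Inf ?X < c" using lt by (simp add: cb_norm_def)
  then obtain C where "C \<in> ?X" "C < c" using cInf_lessD[OF ne] by blast
  then show ?thesis using that by blast
qed

end



lemma less3: "(j::nat) < 3 \<longleftrightarrow> j = 0 \<or> j = 1 \<or> j = 2" by auto
lemma less4: "(j::nat) < 4 \<longleftrightarrow> j = 0 \<or> j = 1 \<or> j = 2 \<or> j = 3" by auto

definition "P_c01 i j = ([[(1), (0), (1)], [(1), (1), (0)], [(0), (1), (1)]] :: real list list) ! i ! j"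
definition "M_c01 i j = ([[(91/127), (-42/127), (78/127)], [(78/127), (91/127), (-42/127)], [(-42/127), (78/127), (91/127)]] :: real list list) ! i ! j"
definition "e_c01 j = ([(3/5), (3/5), (3/5)] :: real list) ! j"

definition "P_c10 i j = ([[(1), (1), (0)], [(1), (1), (1)], [(0), (1), (1)]] :: real list list) ! i ! j"
definition "M_c10 i j = ([[(25/57), (40/57), (-32/57)], [(40/57), (7/57), (40/57)], [(-32/57), (40/57), (25/57)]] :: real list list) ! i ! j"
definition "e_c10 j = ([(1/2), (3/5), (1/2)] :: real list) ! j"

definition "P_c0000 i j = ([[(1), (0), (0), (0)], [(1), (1), (0), (0)], [(0), (1), (1), (0)], [(0), (0), (1), (1)]] :: real list list) ! i ! j"
definition "M_c0000 i j = ([[(10379/14021), (-4660/14021), (4160/14021), (-7060/14021)], [(8660/14021), (9379/14021), (-4040/14021), (4160/14021)], [(-2960/14021), (8840/14021), (9379/14021), (-4660/14021)], [(2260/14021), (-2960/14021), (8660/14021), (10379/14021)]] :: real list list) ! i ! j"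
definition "e_c0000 j = ([(2/5), (3/5), (3/5), (3/10)] :: real list) ! j"

definition "P_c0001 i j = ([[(1), (0), (0), (0)], [(1), (1), (0), (0)], [(0), (1), (1), (0)], [(1), (0), (1), (1)]] :: real list list) ! i ! j"
definition "M_c0001 i j = ([[(0), (0), (0), (-1)], [(78/127), (91/127), (-42/127), (0)], [(-42/127), (78/127), (91/127), (0)], [(91/127), (-42/127), (78/127), (0)]] :: real list list) ! i ! j"
definition "e_c0001 j = ([(3/5), (3/5), (3/5), (0)] :: real list) ! j"

definition "P_c0011 i j = ([[(1), (0), (0), (1)], [(1), (1), (0), (0)], [(0), (1), (1), (0)], [(1), (0), (1), (1)]] :: real list list) ! i ! j"
definition "M_c0011 i j = ([[(7/134), (7/134), (-13/134), (133/134)], [(91/134), (91/134), (-35/134), (-13/134)], [(-49/134), (85/134), (91/134), (7/134)], [(85/134), (-49/134), (91/134), (7/134)]] :: real list list) ! i ! j"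
definition "e_c0011 j = ([(3/5), (3/5), (3/5), (1/10)] :: real list) ! j"

definition "P_c1100 i j = ([[(1), (1), (1), (0)], [(1), (1), (1), (1)], [(0), (1), (1), (1)], [(0), (0), (1), (1)]] :: real list list) ! i ! j"
definition "M_c1100 i j = ([[(581/1619), (11860/30761), (22160/30761), (-13880/30761)], [(1060/1619), (7039/30761), (80/30761), (22160/30761)], [(-1040/1619), (19120/30761), (7039/30761), (11860/30761)], [(-280/1619), (-1040/1619), (1060/1619), (581/1619)]] :: real list list) ! i ! j"
definition "e_c1100 j = ([(2/5), (1/2), (3/5), (1/2)] :: real list) ! j"

definition "P_c1101 i j = ([[(1), (1), (1), (0)], [(1), (1), (1), (1)], [(0), (1), (1), (1)], [(1), (0), (1), (1)]] :: real list list) ! i ! j"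
definition "M_c1101 i j = ([[(2271/4829), (1770/4829), (2550/4829), (-2920/4829)], [(2730/4829), (2721/4829), (-1400/4829), (2550/4829)], [(-2650/4829), (2400/4829), (2721/4829), (1770/4829)], [(1920/4829), (-2650/4829), (2730/4829), (2271/4829)]] :: real list list) ! i ! j"
definition "e_c1101 j = ([(1/2), (1/2), (1/2), (1/2)] :: real list) ! j"

definition "P_c1110 i j = ([[(1), (1), (1), (1)], [(1), (1), (1), (1)], [(0), (1), (1), (1)], [(0), (0), (1), (1)]] :: real list list) ! i ! j"
definition "M_c1110 i j = ([[(4931/37869), (380/37869), (-6820/12623), (31480/37869)], [(30020/37869), (15131/37869), (5480/12623), (5800/37869)], [(-22060/37869), (25640/37869), (4223/12623), (11380/37869)], [(-120/971), (-600/971), (620/971), (429/971)]] :: real list list) ! i ! j"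
definition "e_c1110 j = ([(1/2), (1/2), (3/5), (2/5)] :: real list) ! j"

definition "P_c1111 i j = ([[(1), (1), (1), (1)], [(1), (1), (1), (1)], [(0), (1), (1), (1)], [(1), (0), (1), (1)]] :: real list list) ! i ! j"
definition "M_c1111 i j = ([[(1291/6941), (1000/6941), (-4720/6941), (4820/6941)], [(5000/6941), (4459/6941), (1720/6941), (-580/6941)], [(-320/631), (280/631), (319/631), (340/631)], [(3020/6941), (-4220/6941), (3260/6941), (3259/6941)]] :: real list list) ! i ! j"
definition "e_c1111 j = ([(3/5), (1/2), (1/2), (1/2)] :: real list) ! j"

definition "P_main i j = ([[(1), (1), (1)], [(1), (0), (1)], [(1), (1), (0)]] :: real list list) ! i ! j"
definition "M_main i j = ([[(7/43), (30/43), (30/43)], [(30/43), (-25/43), (18/43)], [(30/43), (18/43), (-25/43)]] :: real list list) ! i ! j"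
definition "e_main j = ([(7/10), (1/2), (1/2)] :: real list) ! j"

definition "P_sharp i j = ([[(1), (0), (0), (1)], [(1), (1), (0), (0)], [(0), (1), (1), (0)], [(0), (0), (1), (1)]] :: real list list) ! i ! j"
definition "M_sharp i j = ([[((2 + sqrt 2)/4), (- sqrt 2/4), ((2 - sqrt 2)/4), (sqrt 2/4)], [(sqrt 2/4), ((2 + sqrt 2)/4), (- sqrt 2/4), ((2 - sqrt 2)/4)], [((2 - sqrt 2)/4), (sqrt 2/4), ((2 + sqrt 2)/4), (- sqrt 2/4)], [(- sqrt 2/4), ((2 - sqrt 2)/4), (sqrt 2/4), ((2 + sqrt 2)/4)]] :: real list list) ! i ! j"
definition "e_sharp j = ([1, 1, 1, 1] :: real list) ! j"

context group
begin

lemma cert_c01: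
  assumes cb: "cb_mult_bound G \<phi> C" and C0: "0 \<le> C" and Cc: "C < (1 + sqrt 2) / 2"
    and xs: "\<forall>i<3. xs i \<in> carrier G" and ys: "\<forall>j<3. ys j \<in> carrier G"
    and hP: "\<And>i j. i < 3 \<Longrightarrow> j < 3 \<Longrightarrow> \<phi> (xs i \<otimes> inv (ys j)) = of_real (P_c01 i j)"
  shows False
proof -
  have orth: "\<And>j k. j < 3 \<Longrightarrow> k < 3 \<Longrightarrow> (\<Sum>i<3. M_c01 i j * M_c01 i k) = (if j = k then 1 else 0)"
    unfolding less3 by (auto simp: M_c01_def eval_nat_numeral)
  have h: "(\<Sum>i<3. (\<Sum>j<3. P_c01 i j * M_c01 i j * e_c01 j)\<^sup>2) \<le> C\<^sup>2 * (\<Sum>j<3. (e_c01 j)\<^sup>2)"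
    by (rule cert_apply[OF xs ys cb C0 orth hP])
  have l: "(\<Sum>i<3. (\<Sum>j<3. P_c01 i j * M_c01 i j * e_c01 j)\<^sup>2) = (771147/403225)"
    by (simp add: P_c01_def M_c01_def e_c01_def eval_nat_numeral)
  have r: "(\<Sum>j<3. (e_c01 j)\<^sup>2) = (27/25)"
    by (simp add: e_c01_def eval_nat_numeral)
  have h': "(771147/403225) \<le> C\<^sup>2 * (27/25)" using h l r by simp
  show False
    by (rule final_contra[OF h' C0 Cc]) (simp_all add: power_divide)
qed

lemma cert_c10:
  assumes cb: "cb_mult_bound G \<phi> C" and C0: "0 \<le> C" and Cc: "C < (1 + sqrt 2) / 2"
    and xs: "\<forall>i<3. xs i \<in> carrier G" and ys: "\<forall>j<3. ys j \<in> carrier G"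
    and hP: "\<And>i j. i < 3 \<Longrightarrow> j < 3 \<Longrightarrow> \<phi> (xs i \<otimes> inv (ys j)) = of_real (P_c10 i j)"
  shows False
proof -
  have orth: "\<And>j k. j < 3 \<Longrightarrow> k < 3 \<Longrightarrow> (\<Sum>i<3. M_c10 i j * M_c10 i k) = (if j = k then 1 else 0)"
    unfolding less3 by (auto simp: M_c10_def eval_nat_numeral)
  have h: "(\<Sum>i<3. (\<Sum>j<3. P_c10 i j * M_c10 i j * e_c10 j)\<^sup>2) \<le> C\<^sup>2 * (\<Sum>j<3. (e_c10 j)\<^sup>2)"
    by (rule cert_apply[OF xs ys cb C0 orth hP])
  have l: "(\<Sum>i<3. (\<Sum>j<3. P_c10 i j * M_c10 i j * e_c10 j)\<^sup>2) = (4051/2850)"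
    by (simp add: P_c10_def M_c10_def e_c10_def eval_nat_numeral)
  have r: "(\<Sum>j<3. (e_c10 j)\<^sup>2) = (43/50)"
    by (simp add: e_c10_def eval_nat_numeral)
  have h': "(4051/2850) \<le> C\<^sup>2 * (43/50)" using h l r by simp
  show False
    by (rule final_contra[OF h' C0 Cc]) (simp_all add: power_divide)
qed

lemma cert_c0000:
  assumes cb: "cb_mult_bound G \<phi> C" and C0: "0 \<le> C" and Cc: "C < (1 + sqrt 2) / 2"
    and xs: "\<forall>i<4. xs i \<in> carrier G" and ys: "\<forall>j<4. ys j \<in> carrier G"
    and hP: "\<And>i j. i < 4 \<Longrightarrow> j < 4 \<Longrightarrow> \<phi> (xs i \<otimes> inv (ys j)) = of_real (P_c0000 i j)"
  shows False
proof -
  have orth: "\<And>j k. j < 4 \<Longrightarrow> k < 4 \<Longrightarrow> (\<Sum>i<4. M_c0000 i j * M_c0000 i k) = (if j = k then 1 else 0)"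
    unfolding less4 by (auto simp: M_c0000_def eval_nat_numeral)
  have h: "(\<Sum>i<4. (\<Sum>j<4. P_c0000 i j * M_c0000 i j * e_c0000 j)\<^sup>2) \<le> C\<^sup>2 * (\<Sum>j<4. (e_c0000 j)\<^sup>2)"
    by (rule cert_apply[OF xs ys cb C0 orth hP])
  have l: "(\<Sum>i<4. (\<Sum>j<4. P_c0000 i j * M_c0000 i j * e_c0000 j)\<^sup>2) = (28843595657/19658844100)"
    by (simp add: P_c0000_def M_c0000_def e_c0000_def eval_nat_numeral)
  have r: "(\<Sum>j<4. (e_c0000 j)\<^sup>2) = (97/100)"
    by (simp add: e_c0000_def eval_nat_numeral)
  have h': "(28843595657/19658844100) \<le> C\<^sup>2 * (97/100)" using h l r by simp
  show False
    by (rule final_contra[OF h' C0 Cc]) (simp_all add: power_divide)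
qed

lemma cert_c0001:
  assumes cb: "cb_mult_bound G \<phi> C" and C0: "0 \<le> C" and Cc: "C < (1 + sqrt 2) / 2"
    and xs: "\<forall>i<4. xs i \<in> carrier G" and ys: "\<forall>j<4. ys j \<in> carrier G"
    and hP: "\<And>i j. i < 4 \<Longrightarrow> j < 4 \<Longrightarrow> \<phi> (xs i \<otimes> inv (ys j)) = of_real (P_c0001 i j)"
  shows False
proof -
  have orth: "\<And>j k. j < 4 \<Longrightarrow> k < 4 \<Longrightarrow> (\<Sum>i<4. M_c0001 i j * M_c0001 i k) = (if j = k then 1 else 0)"
    unfolding less4 by (auto simp: M_c0001_def eval_nat_numeral)
  have h: "(\<Sum>i<4. (\<Sum>j<4. P_c0001 i j * M_c0001 i j * e_c0001 j)\<^sup>2) \<le> C\<^sup>2 * (\<Sum>j<4. (e_c0001 j)\<^sup>2)"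
    by (rule cert_apply[OF xs ys cb C0 orth hP])
  have l: "(\<Sum>i<4. (\<Sum>j<4. P_c0001 i j * M_c0001 i j * e_c0001 j)\<^sup>2) = (771147/403225)"
    by (simp add: P_c0001_def M_c0001_def e_c0001_def eval_nat_numeral)
  have r: "(\<Sum>j<4. (e_c0001 j)\<^sup>2) = (27/25)"
    by (simp add: e_c0001_def eval_nat_numeral)
  have h': "(771147/403225) \<le> C\<^sup>2 * (27/25)" using h l r by simp
  show False
    by (rule final_contra[OF h' C0 Cc]) (simp_all add: power_divide)
qed

lemma cert_c0011:
  assumes cb: "cb_mult_bound G \<phi> C" and C0: "0 \<le> C" and Cc: "C < (1 + sqrt 2) / 2"
    and xs: "\<forall>i<4. xs i \<in> carrier G" and ys: "\<forall>j<4. ys j \<in> carrier G"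
    and hP: "\<And>i j. i < 4 \<Longrightarrow> j < 4 \<Longrightarrow> \<phi> (xs i \<otimes> inv (ys j)) = of_real (P_c0011 i j)"
  shows False
proof -
  have orth: "\<And>j k. j < 4 \<Longrightarrow> k < 4 \<Longrightarrow> (\<Sum>i<4. M_c0011 i j * M_c0011 i k) = (if j = k then 1 else 0)"
    unfolding less4 by (auto simp: M_c0011_def eval_nat_numeral)
  have h: "(\<Sum>i<4. (\<Sum>j<4. P_c0011 i j * M_c0011 i j * e_c0011 j)\<^sup>2) \<le> C\<^sup>2 * (\<Sum>j<4. (e_c0011 j)\<^sup>2)"
    by (rule cert_apply[OF xs ys cb C0 orth hP])
  have l: "(\<Sum>i<4. (\<Sum>j<4. P_c0011 i j * M_c0011 i j * e_c0011 j)\<^sup>2) = (1734097/897800)"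
    by (simp add: P_c0011_def M_c0011_def e_c0011_def eval_nat_numeral)
  have r: "(\<Sum>j<4. (e_c0011 j)\<^sup>2) = (109/100)"
    by (simp add: e_c0011_def eval_nat_numeral)
  have h': "(1734097/897800) \<le> C\<^sup>2 * (109/100)" using h l r by simp
  show False
    by (rule final_contra[OF h' C0 Cc]) (simp_all add: power_divide)
qed

lemma cert_c1100:
  assumes cb: "cb_mult_bound G \<phi> C" and C0: "0 \<le> C" and Cc: "C < (1 + sqrt 2) / 2"
    and xs: "\<forall>i<4. xs i \<in> carrier G" and ys: "\<forall>j<4. ys j \<in> carrier G"
    and hP: "\<And>i j. i < 4 \<Longrightarrow> j < 4 \<Longrightarrow> \<phi> (xs i \<otimes> inv (ys j)) = of_real (P_c1100 i j)"
  shows False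
proof -
  have orth: "\<And>j k. j < 4 \<Longrightarrow> k < 4 \<Longrightarrow> (\<Sum>i<4. M_c1100 i j * M_c1100 i k) = (if j = k then 1 else 0)"
    unfolding less4 by (auto simp: M_c1100_def eval_nat_numeral)
  have h: "(\<Sum>i<4. (\<Sum>j<4. P_c1100 i j * M_c1100 i j * e_c1100 j)\<^sup>2) \<le> C\<^sup>2 * (\<Sum>j<4. (e_c1100 j)\<^sup>2)"
    by (rule cert_apply[OF xs ys cb C0 orth hP])
  have l: "(\<Sum>i<4. (\<Sum>j<4. P_c1100 i j * M_c1100 i j * e_c1100 j)\<^sup>2) = (88643775731/47311956050)"
    by (simp add: P_c1100_def M_c1100_def e_c1100_def eval_nat_numeral)
  have r: "(\<Sum>j<4. (e_c1100 j)\<^sup>2) = (51/50)"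
    by (simp add: e_c1100_def eval_nat_numeral)
  have h': "(88643775731/47311956050) \<le> C\<^sup>2 * (51/50)" using h l r by simp
  show False
    by (rule final_contra[OF h' C0 Cc]) (simp_all add: power_divide)
qed

lemma cert_c1101:
  assumes cb: "cb_mult_bound G \<phi> C" and C0: "0 \<le> C" and Cc: "C < (1 + sqrt 2) / 2"
    and xs: "\<forall>i<4. xs i \<in> carrier G" and ys: "\<forall>j<4. ys j \<in> carrier G"
    and hP: "\<And>i j. i < 4 \<Longrightarrow> j < 4 \<Longrightarrow> \<phi> (xs i \<otimes> inv (ys j)) = of_real (P_c1101 i j)"
  shows False
proof -
  have orth: "\<And>j k. j < 4 \<Longrightarrow> k < 4 \<Longrightarrow> (\<Sum>i<4. M_c1101 i j * M_c1101 i k) = (if j = k then 1 else 0)"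
    unfolding less4 by (auto simp: M_c1101_def eval_nat_numeral)
  have h: "(\<Sum>i<4. (\<Sum>j<4. P_c1101 i j * M_c1101 i j * e_c1101 j)\<^sup>2) \<le> C\<^sup>2 * (\<Sum>j<4. (e_c1101 j)\<^sup>2)"
    by (rule cert_apply[OF xs ys cb C0 orth hP])
  have l: "(\<Sum>i<4. (\<Sum>j<4. P_c1101 i j * M_c1101 i j * e_c1101 j)\<^sup>2) = (45600151/23319241)"
    by (simp add: P_c1101_def M_c1101_def e_c1101_def eval_nat_numeral)
  have r: "(\<Sum>j<4. (e_c1101 j)\<^sup>2) = (1)"
    by (simp add: e_c1101_def eval_nat_numeral)
  have h': "(45600151/23319241) \<le> C\<^sup>2 * (1)" using h l r by simp
  show False
    by (rule final_contra[OF h' C0 Cc]) (simp_all add: power_divide)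
qed

lemma cert_c1110:
  assumes cb: "cb_mult_bound G \<phi> C" and C0: "0 \<le> C" and Cc: "C < (1 + sqrt 2) / 2"
    and xs: "\<forall>i<4. xs i \<in> carrier G" and ys: "\<forall>j<4. ys j \<in> carrier G"
    and hP: "\<And>i j. i < 4 \<Longrightarrow> j < 4 \<Longrightarrow> \<phi> (xs i \<otimes> inv (ys j)) = of_real (P_c1110 i j)"
  shows False
proof -
  have orth: "\<And>j k. j < 4 \<Longrightarrow> k < 4 \<Longrightarrow> (\<Sum>i<4. M_c1110 i j * M_c1110 i k) = (if j = k then 1 else 0)"
    unfolding less4 by (auto simp: M_c1110_def eval_nat_numeral)
  have h: "(\<Sum>i<4. (\<Sum>j<4. P_c1110 i j * M_c1110 i j * e_c1110 j)\<^sup>2) \<le> C\<^sup>2 * (\<Sum>j<4. (e_c1110 j)\<^sup>2)"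
    by (rule cert_apply[OF xs ys cb C0 orth hP])
  have l: "(\<Sum>i<4. (\<Sum>j<4. P_c1110 i j * M_c1110 i j * e_c1110 j)\<^sup>2) = (8808385847/5515619850)"
    by (simp add: P_c1110_def M_c1110_def e_c1110_def eval_nat_numeral)
  have r: "(\<Sum>j<4. (e_c1110 j)\<^sup>2) = (51/50)"
    by (simp add: e_c1110_def eval_nat_numeral)
  have h': "(8808385847/5515619850) \<le> C\<^sup>2 * (51/50)" using h l r by simp
  show False
    by (rule final_contra[OF h' C0 Cc]) (simp_all add: power_divide)
qed

lemma cert_c1111:
  assumes cb: "cb_mult_bound G \<phi> C" and C0: "0 \<le> C" and Cc: "C < (1 + sqrt 2) / 2"
    and xs: "\<forall>i<4. xs i \<in> carrier G" and ys: "\<forall>j<4. ys j \<in> carrier G"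
    and hP: "\<And>i j. i < 4 \<Longrightarrow> j < 4 \<Longrightarrow> \<phi> (xs i \<otimes> inv (ys j)) = of_real (P_c1111 i j)"
  shows False
proof -
  have orth: "\<And>j k. j < 4 \<Longrightarrow> k < 4 \<Longrightarrow> (\<Sum>i<4. M_c1111 i j * M_c1111 i k) = (if j = k then 1 else 0)"
    unfolding less4 by (auto simp: M_c1111_def eval_nat_numeral)
  have h: "(\<Sum>i<4. (\<Sum>j<4. P_c1111 i j * M_c1111 i j * e_c1111 j)\<^sup>2) \<le> C\<^sup>2 * (\<Sum>j<4. (e_c1111 j)\<^sup>2)"
    by (rule cert_apply[OF xs ys cb C0 orth hP])
  have l: "(\<Sum>i<4. (\<Sum>j<4. P_c1111 i j * M_c1111 i j * e_c1111 j)\<^sup>2) = (8778093791/4817748100)"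
    by (simp add: P_c1111_def M_c1111_def e_c1111_def eval_nat_numeral)
  have r: "(\<Sum>j<4. (e_c1111 j)\<^sup>2) = (111/100)"
    by (simp add: e_c1111_def eval_nat_numeral)
  have h': "(8778093791/4817748100) \<le> C\<^sup>2 * (111/100)" using h l r by simp
  show False
    by (rule final_contra[OF h' C0 Cc]) (simp_all add: power_divide)
qed

lemma cert_main:
  assumes cb: "cb_mult_bound G \<phi> C" and C0: "0 \<le> C" and Cc: "C < (1 + sqrt 2) / 2"
    and xs: "\<forall>i<3. xs i \<in> carrier G" and ys: "\<forall>j<3. ys j \<in> carrier G"
    and hP: "\<And>i j. i < 3 \<Longrightarrow> j < 3 \<Longrightarrow> \<phi> (xs i \<otimes> inv (ys j)) = of_real (P_main i j)"
  shows False
proof -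
  have orth: "\<And>j k. j < 3 \<Longrightarrow> k < 3 \<Longrightarrow> (\<Sum>i<3. M_main i j * M_main i k) = (if j = k then 1 else 0)"
    unfolding less3 by (auto simp: M_main_def eval_nat_numeral)
  have h: "(\<Sum>i<3. (\<Sum>j<3. P_main i j * M_main i j * e_main j)\<^sup>2) \<le> C\<^sup>2 * (\<Sum>j<3. (e_main j)\<^sup>2)"
    by (rule cert_apply[OF xs ys cb C0 orth hP])
  have l: "(\<Sum>i<3. (\<Sum>j<3. P_main i j * M_main i j * e_main j)\<^sup>2) = (301801/184900)"
    by (simp add: P_main_def M_main_def e_main_def eval_nat_numeral)
  have r: "(\<Sum>j<3. (e_main j)\<^sup>2) = (99/100)"
    by (simp add: e_main_def eval_nat_numeral)
  have h': "(301801/184900) \<le> C\<^sup>2 * (99/100)" using h l r by simp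
  show False
    by (rule final_contra[OF h' C0 Cc]) (simp_all add: power_divide)
qed

lemma cert_sharp:
  assumes cb: "cb_mult_bound G \<phi> C" and C0: "0 \<le> C" and Cc: "C < (1 + sqrt 2) / 2"
    and xs: "\<forall>i<4. xs i \<in> carrier G" and ys: "\<forall>j<4. ys j \<in> carrier G"
    and hP: "\<And>i j. i < 4 \<Longrightarrow> j < 4 \<Longrightarrow> \<phi> (xs i \<otimes> inv (ys j)) = of_real (P_sharp i j)"
  shows False
proof -
  have orth: "\<And>j k. j < 4 \<Longrightarrow> k < 4 \<Longrightarrow> (\<Sum>i<4. M_sharp i j * M_sharp i k) = (if j = k then 1 else 0)"
    unfolding less4 by (auto simp: M_sharp_def eval_nat_numeral field_simps power2_eq_square)
  have h: "(\<Sum>i<4. (\<Sum>j<4. P_sharp i j * M_sharp i j * e_sharp j)\<^sup>2) \<le> C\<^sup>2 * (\<Sum>j<4. (e_sharp j)\<^sup>2)"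
    by (rule cert_apply[OF xs ys cb C0 orth hP])
  have l: "(\<Sum>i<4. (\<Sum>j<4. P_sharp i j * M_sharp i j * e_sharp j)\<^sup>2) = (3 + 2 * sqrt 2)"
    by (simp add: P_sharp_def M_sharp_def e_sharp_def eval_nat_numeral algebra_simps power2_eq_square)
  have r: "(\<Sum>j<4. (e_sharp j)\<^sup>2) = (4)"
    by (simp add: e_sharp_def eval_nat_numeral)
  have h': "(3 + 2 * sqrt 2) \<le> C\<^sup>2 * (4)" using h l r by simp
  show False
    by (rule final_contra[OF h' C0 Cc]) (simp_all add: algebra_simps power2_eq_square)
qed

lemma toe_entry: "w \<in> carrier G \<Longrightarrow> w [^] (i::nat) \<otimes> inv (w [^] (j::nat)) = w [^] (int i - int j)"
  by (simp add: int_pow_diff int_pow_int)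

lemma sq_in:
  assumes S: "S \<subseteq> carrier G" and e: "\<one> \<in> S" and w: "w \<in> S"
    and cb: "cb_mult_bound G (char_fun S) C" and C0: "0 \<le> C" and Cc: "C < (1 + sqrt 2) / 2"
  shows "w \<otimes> w \<in> S"
proof (rule ccontr)
  assume nw: "w \<otimes> w \<notin> S"
  have wc: "w \<in> carrier G" using S w by auto
  have p2: "w [^] (2::int) \<notin> S"
  proof -
    have "w [^] (2::int) = w [^] (2::nat)" using int_pow_int[of G w 2] by simp
    also have "\<dots> = w \<otimes> w" using wc by (simp add: numeral_2_eq_2)
    finally show ?thesis using nw by simp
  qed
  have xs3: "\<forall>i<3. w [^] (i::nat) \<in> carrier G" using wc by auto
  have xs4: "\<forall>i<4. w [^] (i::nat) \<in> carrier G" using wc by auto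
  have ent: "\<And>i j. char_fun S (w [^] (i::nat) \<otimes> inv (w [^] (j::nat))) = char_fun S (w [^] (int i - int j))"
    using toe_entry[OF wc] by simp
  show False
  proof (cases "w [^] (-1::int) \<in> S")
    case m1: True
    show False
    proof (cases "w [^] (-2::int) \<in> S")
      case m2: True
      show False
      proof (cases "w [^] (-3::int) \<in> S")
        case m3: True
        show False
        proof (cases "w [^] (3::int) \<in> S")
          case p3: True
          show False
            by (rule cert_c1111[OF cb C0 Cc xs4 xs4])
              (unfold ent less4, auto simp: P_c1111_def char_fun_def wc e w p2 m1 m2 m3 p3)
        next
          case p3: False
          show False
            by (rule cert_c1110[OF cb C0 Cc xs4 xs4])
              (unfold ent less4, auto simp: P_c1110_def char_fun_def wc e w p2 m1 m2 m3 p3)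
        qed
      next
        case m3: False
        show False
        proof (cases "w [^] (3::int) \<in> S")
          case p3: True
          show False
            by (rule cert_c1101[OF cb C0 Cc xs4 xs4])
              (unfold ent less4, auto simp: P_c1101_def char_fun_def wc e w p2 m1 m2 m3 p3)
        next
          case p3: False
          show False
            by (rule cert_c1100[OF cb C0 Cc xs4 xs4])
              (unfold ent less4, auto simp: P_c1100_def char_fun_def wc e w p2 m1 m2 m3 p3)
        qed
      qed
    next
      case m2: False
      show False
            by (rule cert_c10[OF cb C0 Cc xs3 xs3])
              (unfold ent less3, auto simp: P_c10_def char_fun_def wc e w p2 m1 m2)
    qed
  next
    case m1: False
    show False
    proof (cases "w [^] (-2::int) \<in> S")
      case m2: True
      show False
            by (rule cert_c01[OF cb C0 Cc xs3 xs3])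
              (unfold ent less3, auto simp: P_c01_def char_fun_def wc e w p2 m1 m2)
    next
      case m2: False
      show False
      proof (cases "w [^] (-3::int) \<in> S")
        case m3: True
        show False
        proof (cases "w [^] (3::int) \<in> S")
          case p3: True
          show False
            by (rule cert_c0011[OF cb C0 Cc xs4 xs4])
              (unfold ent less4, auto simp: P_c0011_def char_fun_def wc e w p2 m1 m2 m3 p3)
        next
          case p3: False
          show False
            by (rule cert_sharp[OF cb C0 Cc xs4 xs4])
              (unfold ent less4, auto simp: P_sharp_def char_fun_def wc e w p2 m1 m2 m3 p3)
        qed
      next
        case m3: False
        show False
        proof (cases "w [^] (3::int) \<in> S")
          case p3: True
          show False
            by (rule cert_c0001[OF cb C0 Cc xs4 xs4])
              (unfold ent less4, auto simp: P_c0001_def char_fun_def wc e w p2 m1 m2 m3 p3)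
        next
          case p3: False
          show False
            by (rule cert_c0000[OF cb C0 Cc xs4 xs4])
              (unfold ent less4, auto simp: P_c0000_def char_fun_def wc e w p2 m1 m2 m3 p3)
        qed
      qed
    qed
  qed
qed

lemma main_aux:
  assumes "S \<subseteq> carrier G"
    and "\<one> \<in> S"
    and "char_fun S \<in> McbA G"
    and "cb_norm G (char_fun S) < (1 + sqrt 2) / 2"
    and "u \<in> S" and "v \<in> S"
  shows "u \<otimes> v \<in> S \<or> v \<otimes> u \<in> S"
proof (rule ccontr)
  assume "\<not> (u \<otimes> v \<in> S \<or> v \<otimes> u \<in> S)"
  then have nuv: "u \<otimes> v \<notin> S" and nvu: "v \<otimes> u \<notin> S" by auto
  note Sc = assms(1) and e = assms(2) and u = assms(5) and v = assms(6)
  have uc: "u \<in> carrier G" and vc: "v \<in> carrier G" using Sc u v by auto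
  obtain C where cb: "cb_mult_bound G (char_fun S) C" and C0: "0 \<le> C" and Cc: "C < (1 + sqrt 2) / 2"
    using obtain_C[OF assms(3) assms(4)] by blast
  have uu: "u \<otimes> u \<in> S" by (rule sq_in[OF Sc e u cb C0 Cc])
  have vv: "v \<otimes> v \<in> S" by (rule sq_in[OF Sc e v cb C0 Cc])
  have xs: "\<forall>i<3. [\<one>, u, v] ! i \<in> carrier G" using uc vc by (auto simp: less3)
  have ys: "\<forall>j<3. [\<one>, inv v, inv u] ! j \<in> carrier G" using uc vc by (auto simp: less3)
  show False
    by (rule cert_main[OF cb C0 Cc xs ys])
      (unfold less3, auto simp: P_main_def char_fun_def uc vc e u v uu vv nuv nvu)
qed

end

theorem mainTheorem4:
  fixes G :: "('a, 'b) monoid_scheme" and S :: "'a set" and u v :: 'a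
  assumes "group G"
    and "S \<subseteq> carrier G"
    and "\<one>\<^bsub>G\<^esub> \<in> S"
    and "char_fun S \<in> McbA G"
    and "cb_norm G (char_fun S) < (1 + sqrt 2) / 2"
    and "u \<in> S" and "v \<in> S"
  shows "u \<otimes>\<^bsub>G\<^esub> v \<in> S \<or> v \<otimes>\<^bsub>G\<^esub> u \<in> S"
  using group.main_aux[OF assms(1) assms(2) assms(3) assms(4) assms(5) assms(6) assms(7)] .

end
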